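(* For every $n \in \mathbb{N}$, \[ g(n) \le \tau_3(n) \le \tfrac{9}{2}\, g(n). \]
   Context: A colouring of $E(K_n)$ is almost Gallai (almost $3$-Gallai) if no two rainbow triangles share an edge, where a triangle is rainbow if its three edges have pairwise distinct colours. $\tau_3(n)$ is the maximum number of rainbow triangles in an almost Gallai colouring $c: E(K_n) \to \mathbb{N}$ (any number of colours), and $g(n)$ is the maximum number of rainbow triangles in an almost Gallai colouring $c : E(K_n) \to \{R,B,G\}$ using at most three colours. *)

theory Defs
  imports Main
begin

text \<open>Vertices of K_n are 0..n-1. An edge colouring assigns a colour to each
  2-element set {x,y}; its value on other sets is irrelevant.\<close>

datatype rgb = R | B | G

definition triangles :: "nat \<Rightarrow> nat set set" where
  "triangles n = {T. T \<subseteq> {..<n} \<and> card T = 3}"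

definition rainbow :: "(nat set \<Rightarrow> 'c) \<Rightarrow> nat set \<Rightarrow> bool" where
  "rainbow c T \<longleftrightarrow> (\<exists>x y z. T = {x, y, z} \<and> x \<noteq> y \<and> y \<noteq> z \<and> x \<noteq> z \<and>
      c {x, y} \<noteq> c {y, z} \<and> c {x, y} \<noteq> c {x, z} \<and> c {y, z} \<noteq> c {x, z})"

definition rainbow_triangles :: "nat \<Rightarrow> (nat set \<Rightarrow> 'c) \<Rightarrow> nat set set" where
  "rainbow_triangles n c = {T \<in> triangles n. rainbow c T}"

definition almost_gallai :: "nat \<Rightarrow> (nat set \<Rightarrow> 'c) \<Rightarrow> bool" where
  "almost_gallai n c \<longleftrightarrow> (\<forall>T1 \<in> rainbow_triangles n c. \<forall>T2 \<in> rainbow_triangles n c.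
      T1 \<noteq> T2 \<longrightarrow> \<not> (\<exists>x y. x \<noteq> y \<and> {x, y} \<subseteq> T1 \<and> {x, y} \<subseteq> T2))"

text \<open>tau_3(n): maximum over colourings with colours in \<nat> (any number of colours).\<close>
definition tau3 :: "nat \<Rightarrow> nat" where
  "tau3 n = Max {card (rainbow_triangles n c) | c :: nat set \<Rightarrow> nat. almost_gallai n c}"

definition g :: "nat \<Rightarrow> nat" where
  "g n = Max {card (rainbow_triangles n c) | c :: nat set \<Rightarrow> rgb. almost_gallai n c}"

end

theory Submission
  imports Defs "HOL-Library.FuncSet"
begin

lemma rgb_UNIV: "(UNIV :: rgb set) = {R, B, G}"
  using rgb.exhaust by auto

lemma card_rgb: "card (UNIV :: rgb set) = 3"
  unfolding rgb_UNIV by simp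

lemma finite_rgb[simp]: "finite (UNIV :: rgb set)"
  unfolding rgb_UNIV by simp

lemma rainbow_comp: assumes "rainbow (\<lambda>e. f (c e)) T" shows "rainbow c T"
proof -
  obtain x y z where h: "T = {x, y, z}" "x \<noteq> y" "y \<noteq> z" "x \<noteq> z"
      "f (c {x, y}) \<noteq> f (c {y, z})" "f (c {x, y}) \<noteq> f (c {x, z})" "f (c {y, z}) \<noteq> f (c {x, z})"
    using assms unfolding rainbow_def by blast
  have "c {x, y} \<noteq> c {y, z}" "c {x, y} \<noteq> c {x, z}" "c {y, z} \<noteq> c {x, z}"
    using h(5-7) by metis+
  then show ?thesis unfolding rainbow_def using h(1-4)
    by (rule_tac x=x in exI, rule_tac x=y in exI, rule_tac x=z in exI) simp
qed

lemma rainbow_inj: assumes "inj f" shows "rainbow (\<lambda>e. f (c e)) T = rainbow c T"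
proof
  assume "rainbow c T"
  then obtain x y z where h: "T = {x, y, z}" "x \<noteq> y" "y \<noteq> z" "x \<noteq> z"
      "c {x, y} \<noteq> c {y, z}" "c {x, y} \<noteq> c {x, z}" "c {y, z} \<noteq> c {x, z}"
    unfolding rainbow_def by blast
  have "f (c {x, y}) \<noteq> f (c {y, z})" "f (c {x, y}) \<noteq> f (c {x, z})" "f (c {y, z}) \<noteq> f (c {x, z})"
    using h(5-7) assms by (metis injD)+
  then show "rainbow (\<lambda>e. f (c e)) T" unfolding rainbow_def using h(1-4)
    by (rule_tac x=x in exI, rule_tac x=y in exI, rule_tac x=z in exI) simp
qed (rule rainbow_comp)

lemma RT_comp_subset: "rainbow_triangles n (\<lambda>e. f (c e)) \<subseteq> rainbow_triangles n c"
  unfolding rainbow_triangles_def using rainbow_comp by blast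

lemma RT_comp_eq: "rainbow_triangles n (\<lambda>e. f (c e)) = {T \<in> rainbow_triangles n c. rainbow (\<lambda>e. f (c e)) T}"
  unfolding rainbow_triangles_def using rainbow_comp by blast

lemma ball2_mono: "A' \<subseteq> A \<Longrightarrow> \<forall>a\<in>A. \<forall>b\<in>A. P a b \<Longrightarrow> \<forall>a\<in>A'. \<forall>b\<in>A'. P a b"
  by blast

lemma ag_comp: "almost_gallai n c \<Longrightarrow> almost_gallai n (\<lambda>e. f (c e))"
  unfolding almost_gallai_def by (rule ball2_mono[OF RT_comp_subset])

lemma finite_triangles: "finite (triangles n)"
  by (rule finite_subset[of _ "Pow {..<n}"]) (auto simp: triangles_def)

lemma finite_RT: "finite (rainbow_triangles n c)"
  by (rule finite_subset[OF _ finite_triangles]) (auto simp: rainbow_triangles_def)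

lemma card_RT_le: "card (rainbow_triangles n c) \<le> card (triangles n)"
  by (rule card_mono[OF finite_triangles]) (auto simp: rainbow_triangles_def)

lemma RT_const: "rainbow_triangles n (\<lambda>_. a) = {}"
  unfolding rainbow_triangles_def rainbow_def by simp

lemma ag_const: "almost_gallai n (\<lambda>_. a)"
  unfolding almost_gallai_def RT_const by simp

lemma fin_cards: "finite {card (rainbow_triangles n c) | c. P c}"
proof (rule finite_subset)
  show "{card (rainbow_triangles n c) | c. P c} \<subseteq> {..card (triangles n)}"
    using card_RT_le by blast
qed simp

lemma g_ge: "almost_gallai n (c :: nat set \<Rightarrow> rgb) \<Longrightarrow> card (rainbow_triangles n c) \<le> g n"
  unfolding g_def by (rule Max_ge[OF fin_cards]) blast

lemma tau3_ge: "almost_gallai n (c :: nat set \<Rightarrow> nat) \<Longrightarrow> card (rainbow_triangles n c) \<le> tau3 n"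
  unfolding tau3_def by (rule Max_ge[OF fin_cards]) blast

lemma g_in: "\<exists>c :: nat set \<Rightarrow> rgb. almost_gallai n c \<and> g n = card (rainbow_triangles n c)"
proof -
  have "g n \<in> {card (rainbow_triangles n c) | c :: nat set \<Rightarrow> rgb. almost_gallai n c}"
    unfolding g_def
  proof (rule Max_in[OF fin_cards])
    have "card (rainbow_triangles n (\<lambda>_. R)) \<in> {card (rainbow_triangles n c) | c :: nat set \<Rightarrow> rgb. almost_gallai n c}"
      by (rule CollectI, rule exI[of _ "\<lambda>_. R"]) (simp add: ag_const)
    then show "{card (rainbow_triangles n c) | c :: nat set \<Rightarrow> rgb. almost_gallai n c} \<noteq> {}" by (metis empty_iff)
  qed
  then show ?thesis by auto
qed

lemma tau3_in: "\<exists>c :: nat set \<Rightarrow> nat. almost_gallai n c \<and> tau3 n = card (rainbow_triangles n c)"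
proof -
  have "tau3 n \<in> {card (rainbow_triangles n c) | c :: nat set \<Rightarrow> nat. almost_gallai n c}"
    unfolding tau3_def
  proof (rule Max_in[OF fin_cards])
    have "card (rainbow_triangles n (\<lambda>_. (0::nat))) \<in> {card (rainbow_triangles n c) | c :: nat set \<Rightarrow> nat. almost_gallai n c}"
      by (rule CollectI, rule exI[of _ "\<lambda>_. (0::nat)"]) (simp add: ag_const)
    then show "{card (rainbow_triangles n c) | c :: nat set \<Rightarrow> nat. almost_gallai n c} \<noteq> {}" by (metis empty_iff)
  qed
  then show ?thesis by auto
qed

lemma part1: "g n \<le> tau3 n"
proof -
  obtain c :: "nat set \<Rightarrow> rgb" where c: "almost_gallai n c" "g n = card (rainbow_triangles n c)"
    using g_in by blast
  define h :: "rgb \<Rightarrow> nat" where "h = (\<lambda>x. case x of R \<Rightarrow> 0 | B \<Rightarrow> 1 | G \<Rightarrow> 2)"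
  have inj: "inj h" unfolding inj_def h_def by (auto split: rgb.splits)
  have eq: "rainbow_triangles n (\<lambda>e. h (c e)) = rainbow_triangles n c"
    unfolding rainbow_triangles_def using rainbow_inj[OF inj] by blast
  have "almost_gallai n (\<lambda>e. h (c e))"
    using c(1) unfolding almost_gallai_def eq .
  from tau3_ge[OF this] show ?thesis using c(2) eq by simp
qed

definition Dset :: "(rgb \<times> rgb \<times> rgb) set" where
  "Dset = {(u, v, w). u \<noteq> v \<and> v \<noteq> w \<and> u \<noteq> w}"

lemma Dset_eq: "Dset = {(R,B,G),(R,G,B),(B,R,G),(B,G,R),(G,R,B),(G,B,R)}"
proof (rule set_eqI)
  fix t :: "rgb \<times> rgb \<times> rgb"
  obtain u v w where t: "t = (u, v, w)" by (cases t) auto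
  show "t \<in> Dset \<longleftrightarrow> t \<in> {(R,B,G),(R,G,B),(B,R,G),(B,G,R),(G,R,B),(G,B,R)}"
    unfolding t by (cases u; cases v; cases w) (simp_all add: Dset_def)
qed

lemma card_Dset: "card Dset = 6"
  unfolding Dset_eq by simp

lemma count_fix:
  assumes fin: "finite C" and p: "p \<in> C" and q: "q \<in> C" and r: "r \<in> C"
    and d: "p \<noteq> q" "q \<noteq> r" "p \<noteq> r"
  shows "card (PiE C (\<lambda>i. if i = p then {u} else if i = q then {v} else if i = r then {w} else (UNIV :: rgb set)))
      = 3 ^ (card C - 3)"
proof -
  let ?B = "(\<lambda>i. if i = p then {u} else if i = q then {v} else if i = r then {w} else (UNIV :: rgb set))"
  have "card (PiE C ?B) = (\<Prod>i\<in>C. card (?B i))" by (rule card_PiE[OF fin])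
  also have "\<dots> = (\<Prod>i\<in>C - {p,q,r}. card (?B i)) * (\<Prod>i\<in>{p,q,r}. card (?B i))"
    by (rule prod.subset_diff) (use p q r fin in auto)
  also have "(\<Prod>i\<in>{p,q,r}. card (?B i)) = 1" using d by simp
  also have "(\<Prod>i\<in>C - {p,q,r}. card (?B i)) = (\<Prod>i\<in>C - {p,q,r}. 3)"
    by (rule prod.cong) (auto simp: card_rgb)
  also have "\<dots> = 3 ^ card (C - {p,q,r})" by simp
  also have "card (C - {p,q,r}) = card C - 3" using p q r d fin by (simp add: card_Diff_subset)
  finally show ?thesis by simp
qed

lemma count_distinct:
  assumes fin: "finite C" and p: "p \<in> C" and q: "q \<in> C" and r: "r \<in> C"
    and d: "p \<noteq> q" "q \<noteq> r" "p \<noteq> r"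
  shows "card {f \<in> PiE C (\<lambda>_. UNIV :: rgb set). f p \<noteq> f q \<and> f q \<noteq> f r \<and> f p \<noteq> f r}
      = 6 * 3 ^ (card C - 3)"
proof -
  define A where "A = (\<lambda>(u,v,w). PiE C (\<lambda>i. if i = p then {u} else if i = q then {v} else if i = r then {w} else (UNIV :: rgb set)))"
  have eq: "{f \<in> PiE C (\<lambda>_. UNIV :: rgb set). f p \<noteq> f q \<and> f q \<noteq> f r \<and> f p \<noteq> f r} = (\<Union>t\<in>Dset. A t)"
  proof (rule set_eqI, rule iffI)
    fix f assume f: "f \<in> {f \<in> PiE C (\<lambda>_. UNIV :: rgb set). f p \<noteq> f q \<and> f q \<noteq> f r \<and> f p \<noteq> f r}"
    then have "(f p, f q, f r) \<in> Dset" by (auto simp: Dset_def)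
    moreover have "f \<in> A (f p, f q, f r)" using f unfolding A_def by (auto simp: PiE_def Pi_def)
    ultimately show "f \<in> (\<Union>t\<in>Dset. A t)" by blast
  next
    fix f assume "f \<in> (\<Union>t\<in>Dset. A t)"
    then obtain u v w where t: "(u,v,w) \<in> Dset" and f: "f \<in> A (u,v,w)" by auto
    have "f p = u" "f q = v" "f r = w" using f p q r d unfolding A_def by (auto simp: PiE_def Pi_def)
    then show "f \<in> {f \<in> PiE C (\<lambda>_. UNIV :: rgb set). f p \<noteq> f q \<and> f q \<noteq> f r \<and> f p \<noteq> f r}"
      using t f unfolding A_def Dset_def by (auto simp: PiE_def Pi_def)
  qed
  have "card (\<Union>t\<in>Dset. A t) = (\<Sum>t\<in>Dset. card (A t))"
  proof (rule card_UN_disjoint)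
    show "finite Dset" unfolding Dset_eq by simp
    show "\<forall>t\<in>Dset. finite (A t)" unfolding A_def using fin by (auto intro!: finite_PiE)
    show "\<forall>t\<in>Dset. \<forall>s\<in>Dset. t \<noteq> s \<longrightarrow> A t \<inter> A s = {}"
    proof (intro ballI impI)
      fix t s assume "t \<in> Dset" "s \<in> Dset" "t \<noteq> s"
      obtain u v w where tt: "t = (u,v,w)" by (cases t) auto
      obtain u' v' w' where ss: "s = (u',v',w')" by (cases s) auto
      show "A t \<inter> A s = {}"
      proof (rule ccontr)
        assume "A t \<inter> A s \<noteq> {}"
        then obtain f where "f \<in> A t" "f \<in> A s" by blast
        then have "f p = u" "f q = v" "f r = w" "f p = u'" "f q = v'" "f r = w'"
          using p q r d unfolding tt ss A_def by (auto simp: PiE_def Pi_def)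
        then show False using \<open>t \<noteq> s\<close> tt ss by simp
      qed
    qed
  qed
  also have "\<dots> = (\<Sum>t\<in>Dset. 3 ^ (card C - 3))"
    by (rule sum.cong) (auto simp: A_def count_fix[OF assms])
  also have "\<dots> = 6 * 3 ^ (card C - 3)" by (simp add: card_Dset)
  finally show ?thesis using eq by simp
qed

lemma card_filter_sum: assumes "finite A" shows "card {x \<in> A. P x} = (\<Sum>x\<in>A. if P x then 1 else 0)"
proof -
  have "card {x \<in> A. P x} = (\<Sum>x\<in>{x \<in> A. P x}. 1)" by (rule card_eq_sum)
  also have "\<dots> = (\<Sum>x\<in>A. if P x then 1 else 0)" by (rule sum.inter_filter[OF assms])
  finally show ?thesis .
qed

lemma part2_aux:
  assumes ag: "almost_gallai n (c :: nat set \<Rightarrow> nat)"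
  shows "2 * card (rainbow_triangles n c) \<le> 9 * g n"
proof (cases "rainbow_triangles n c = {}")
  case True then show ?thesis by simp
next
  case False
  define C where "C = c ` Pow {..<n}"
  define F where "F = PiE C (\<lambda>_. UNIV :: rgb set)"
  define RT where "RT = rainbow_triangles n c"
  define k where "k = card C"
  have finC: "finite C" unfolding C_def by simp
  have finF: "finite F" unfolding F_def using finC by (auto intro!: finite_PiE)
  have cardF: "card F = 3 ^ k" unfolding F_def k_def by (simp add: card_PiE[OF finC] card_rgb)
  have finRT: "finite RT" unfolding RT_def by (rule finite_RT)
  have witness: "\<exists>p q r. p \<in> C \<and> q \<in> C \<and> r \<in> C \<and> p \<noteq> q \<and> q \<noteq> r \<and> p \<noteq> r \<and>
      (\<forall>f :: nat \<Rightarrow> rgb. f p \<noteq> f q \<and> f q \<noteq> f r \<and> f p \<noteq> f r \<longrightarrow> rainbow (\<lambda>e. f (c e)) T)" if T: "T \<in> RT" for T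
  proof -
    from T have sub: "T \<subseteq> {..<n}" and rb: "rainbow c T"
      unfolding RT_def rainbow_triangles_def triangles_def by auto
    from rb obtain x y z where xyz: "T = {x, y, z}" "x \<noteq> y" "y \<noteq> z" "x \<noteq> z"
      "c {x, y} \<noteq> c {y, z}" "c {x, y} \<noteq> c {x, z}" "c {y, z} \<noteq> c {x, z}"
      unfolding rainbow_def by blast
    have "c {x,y} \<in> C" "c {y,z} \<in> C" "c {x,z} \<in> C" unfolding C_def using sub xyz(1) by auto
    moreover have "\<forall>f :: nat \<Rightarrow> rgb. f (c {x,y}) \<noteq> f (c {y,z}) \<and> f (c {y,z}) \<noteq> f (c {x,z}) \<and> f (c {x,y}) \<noteq> f (c {x,z})
        \<longrightarrow> rainbow (\<lambda>e. f (c e)) T"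
      unfolding rainbow_def using xyz(1-4) by blast
    ultimately show ?thesis using xyz(5-7) by blast
  qed
  obtain T0 where "T0 \<in> RT" using False unfolding RT_def by blast
  then obtain p0 q0 r0 where "p0 \<in> C" "q0 \<in> C" "r0 \<in> C" "p0 \<noteq> q0" "q0 \<noteq> r0" "p0 \<noteq> r0"
    using witness by blast
  then have "{p0,q0,r0} \<subseteq> C" "card {p0,q0,r0} = 3" by auto
  then have k3: "3 \<le> k" unfolding k_def using card_mono[OF finC] by metis
  have low: "6 * 3 ^ (k - 3) \<le> card {f \<in> F. rainbow (\<lambda>e. f (c e)) T}" if T: "T \<in> RT" for T
  proof -
    from witness[OF T] obtain p q r where H: "p \<in> C \<and> q \<in> C \<and> r \<in> C \<and> p \<noteq> q \<and> q \<noteq> r \<and> p \<noteq> r \<and>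
      (\<forall>f :: nat \<Rightarrow> rgb. f p \<noteq> f q \<and> f q \<noteq> f r \<and> f p \<noteq> f r \<longrightarrow> rainbow (\<lambda>e. f (c e)) T)"
      by blast
    have pqr: "p \<in> C" "q \<in> C" "r \<in> C" "p \<noteq> q" "q \<noteq> r" "p \<noteq> r" using H by simp_all
    have Hf: "\<forall>f :: nat \<Rightarrow> rgb. f p \<noteq> f q \<and> f q \<noteq> f r \<and> f p \<noteq> f r \<longrightarrow> rainbow (\<lambda>e. f (c e)) T"
      using H by (elim conjE)
    have imp: "rainbow (\<lambda>e. f (c e)) T" if "f p \<noteq> f q \<and> f q \<noteq> f r \<and> f p \<noteq> f r" for f :: "nat \<Rightarrow> rgb"
      using spec[OF Hf, of f] that by (rule mp)
    have "6 * 3 ^ (k - 3) = card {f \<in> F. f p \<noteq> f q \<and> f q \<noteq> f r \<and> f p \<noteq> f r}"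
      unfolding F_def k_def by (rule count_distinct[OF finC pqr, symmetric])
    also have "\<dots> \<le> card {f \<in> F. rainbow (\<lambda>e. f (c e)) T}"
    proof (rule card_mono)
      show "finite {f \<in> F. rainbow (\<lambda>e. f (c e)) T}" using finF by simp
      show "{f \<in> F. f p \<noteq> f q \<and> f q \<noteq> f r \<and> f p \<noteq> f r} \<subseteq> {f \<in> F. rainbow (\<lambda>e. f (c e)) T}"
      proof (rule subsetI)
        fix f assume "f \<in> {f \<in> F. f p \<noteq> f q \<and> f q \<noteq> f r \<and> f p \<noteq> f r}"
        then have "f \<in> F" "f p \<noteq> f q \<and> f q \<noteq> f r \<and> f p \<noteq> f r" by simp_all
        then show "f \<in> {f \<in> F. rainbow (\<lambda>e. f (c e)) T}" using imp by simp
      qed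
    qed
    finally show ?thesis .
  qed
  have "(\<Sum>f\<in>F. card (rainbow_triangles n (\<lambda>e. f (c e))))
      = (\<Sum>f\<in>F. \<Sum>T\<in>RT. if rainbow (\<lambda>e. f (c e)) T then 1 else 0)"
    by (rule sum.cong) (simp_all only: RT_comp_eq RT_def card_filter_sum[OF finite_RT])
  also have "\<dots> = (\<Sum>T\<in>RT. \<Sum>f\<in>F. if rainbow (\<lambda>e. f (c e)) T then 1 else 0)"
    by (rule sum.swap)
  also have "\<dots> = (\<Sum>T\<in>RT. card {f \<in> F. rainbow (\<lambda>e. f (c e)) T})"
    by (rule sum.cong) (simp_all only: card_filter_sum[OF finF])
  finally have S: "(\<Sum>f\<in>F. card (rainbow_triangles n (\<lambda>e. f (c e))))
      = (\<Sum>T\<in>RT. card {f \<in> F. rainbow (\<lambda>e. f (c e)) T})" .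
  have "card RT * (6 * 3 ^ (k - 3)) = (\<Sum>T\<in>RT. 6 * 3 ^ (k - 3))" by simp
  also have "\<dots> \<le> (\<Sum>T\<in>RT. card {f \<in> F. rainbow (\<lambda>e. f (c e)) T})"
    by (rule sum_mono) (rule low)
  also have "\<dots> = (\<Sum>f\<in>F. card (rainbow_triangles n (\<lambda>e. f (c e))))" using S by simp
  also have "\<dots> \<le> (\<Sum>f\<in>F. g n)"
    by (rule sum_mono) (rule g_ge[OF ag_comp[OF ag]])
  also have "\<dots> = 3 ^ k * g n" using cardF by simp
  also have "(3::nat) ^ k = 27 * 3 ^ (k - 3)"
  proof -
    have "k = (k - 3) + 3" using k3 by simp
    then have "(3::nat) ^ k = 3 ^ (k - 3) * 3 ^ 3" by (metis power_add)
    then show ?thesis by simp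
  qed
  finally have "3 ^ (k - 3) * (6 * card RT) \<le> 3 ^ (k - 3) * (27 * g n)" by (simp add: ac_simps)
  then have "6 * card RT \<le> 27 * g n" by simp
  then show ?thesis unfolding RT_def by simp
qed

theorem lemma4p1:
  fixes n :: nat
  shows "g n \<le> tau3 n \<and> 2 * tau3 n \<le> 9 * g n"
proof
  show "g n \<le> tau3 n" by (rule part1)
  obtain c :: "nat set \<Rightarrow> nat" where "almost_gallai n c" "tau3 n = card (rainbow_triangles n c)"
    using tau3_in by blast
  then show "2 * tau3 n \<le> 9 * g n" using part2_aux by simp
qed

end
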